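(* Let $R=\mathbb{F}_q+v\mathbb{F}_q+v^2\mathbb{F}_q$ with $v^3=v$, let $M$ be an $(n-1)\times(n-1)$ circulant matrix over $R$, and let $\alpha,\omega\in R$. Then the matrix $$G=\left(I_n\ \middle|\ \begin{array}{cccc}\alpha&\omega&\cdots&\omega\\ \omega&&&\\ \vdots&&M&\\ \omega&&&\end{array}\right)$$ is a generator matrix of a formally self-dual code over $R$.
   Context: $q$ is a prime power and $R=\mathbb{F}_q[v]/\langle v^3-v\rangle$. A circulant matrix is one in which each row is the cyclic shift one position to the right of the previous row. A linear code of length $N$ over $R$ is an $R$-submodule of $R^N$; $C^\perp=\{x\in R^N:\sum x_iy_i=0\ \forall y\in C\}$. For $c\in R^N$ written uniquely as $a_0+va_1+v^2a_2$ with $a_i\in\mathbb{F}_q^N$, the Gray map is $\Psi(c)=(a_0,a_0+a_2,a_1)$ and the Lee weight $w_L(c)$ is the Hamming weight of $\Psi(c)$. $C$ is formally self-dual if $C$ and $C^\perp$ have the same Lee weight enumerator $\sum_c X^{3N-w_L(c)}Y^{w_L(c)}$. *)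

theory Defs
  imports Main
begin

text \<open>The ring R = F[v]/(v^3 - v): the element R3 a0 a1 a2 stands for a0 + v a1 + v^2 a2.\<close>

datatype 'a R3 = R3 (c0: 'a) (c1: 'a) (c2: 'a)

instantiation R3 :: (field) comm_ring_1
begin

definition zero_R3 :: "'a R3" where "zero_R3 = R3 0 0 0"
definition one_R3 :: "'a R3" where "one_R3 = R3 1 0 0"
definition plus_R3 :: "'a R3 \<Rightarrow> 'a R3 \<Rightarrow> 'a R3" where
  "plus_R3 x y = R3 (c0 x + c0 y) (c1 x + c1 y) (c2 x + c2 y)"
definition minus_R3 :: "'a R3 \<Rightarrow> 'a R3 \<Rightarrow> 'a R3" where
  "minus_R3 x y = R3 (c0 x - c0 y) (c1 x - c1 y) (c2 x - c2 y)"
definition uminus_R3 :: "'a R3 \<Rightarrow> 'a R3" where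
  "uminus_R3 x = R3 (- c0 x) (- c1 x) (- c2 x)"
text \<open>Multiplication using v^3 = v (hence v^4 = v^2).\<close>
definition times_R3 :: "'a R3 \<Rightarrow> 'a R3 \<Rightarrow> 'a R3" where
  "times_R3 x y = R3 (c0 x * c0 y)
     (c0 x * c1 y + c1 x * c0 y + c1 x * c2 y + c2 x * c1 y)
     (c0 x * c2 y + c2 x * c0 y + c1 x * c1 y + c2 x * c2 y)"

instance
  by standard (auto simp: zero_R3_def one_R3_def plus_R3_def minus_R3_def uminus_R3_def
      times_R3_def algebra_simps intro!: R3.expand)

end

definition vecs :: "nat \<Rightarrow> (nat \<Rightarrow> 'a::field R3) set" where
  "vecs N = {c. \<forall>i\<ge>N. c i = 0}"

definition is_linear_code :: "nat \<Rightarrow> (nat \<Rightarrow> 'a::field R3) set \<Rightarrow> bool" where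
  "is_linear_code N C \<longleftrightarrow> C \<subseteq> vecs N \<and> (\<lambda>_. 0) \<in> C \<and>
     (\<forall>x\<in>C. \<forall>y\<in>C. (\<lambda>i. x i + y i) \<in> C) \<and>
     (\<forall>r. \<forall>x\<in>C. (\<lambda>i. r * x i) \<in> C)"

definition dual_code :: "nat \<Rightarrow> (nat \<Rightarrow> 'a::field R3) set \<Rightarrow> (nat \<Rightarrow> 'a R3) set" where
  "dual_code N C = {x \<in> vecs N. \<forall>y\<in>C. (\<Sum>i<N. x i * y i) = 0}"

definition gray :: "nat \<Rightarrow> (nat \<Rightarrow> 'a::field R3) \<Rightarrow> nat \<Rightarrow> 'a" where
  "gray N c k = (if k < N then c0 (c k)
                 else if k < 2*N then c0 (c (k - N)) + c2 (c (k - N))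
                 else if k < 3*N then c1 (c (k - 2*N)) else 0)"

definition lee_weight :: "nat \<Rightarrow> (nat \<Rightarrow> 'a::field R3) \<Rightarrow> nat" where
  "lee_weight N c = card {k. k < 3*N \<and> gray N c k \<noteq> 0}"

text \<open>Lee weight enumerator, represented by its coefficient sequence:
  w \<mapsto> number of codewords of Lee weight w (coefficient of X^(3N-w) Y^w).\<close>
definition lee_weight_enum :: "nat \<Rightarrow> (nat \<Rightarrow> 'a::field R3) set \<Rightarrow> nat \<Rightarrow> nat" where
  "lee_weight_enum N C w = card {c\<in>C. lee_weight N c = w}"

definition formally_self_dual :: "nat \<Rightarrow> (nat \<Rightarrow> 'a::field R3) set \<Rightarrow> bool" where
  "formally_self_dual N C \<longleftrightarrow> lee_weight_enum N C = lee_weight_enum N (dual_code N C)"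

definition row_span :: "nat \<Rightarrow> nat \<Rightarrow> (nat \<Rightarrow> nat \<Rightarrow> 'a::field R3) \<Rightarrow> (nat \<Rightarrow> 'a R3) set" where
  "row_span k N G = {c. \<exists>x. c = (\<lambda>j. if j < N then (\<Sum>i<k. x i * G i j) else 0)}"

definition circulant :: "nat \<Rightarrow> (nat \<Rightarrow> nat \<Rightarrow> 'b) \<Rightarrow> bool" where
  "circulant m M \<longleftrightarrow> (\<forall>i<m. \<forall>j<m. M i j = M 0 ((j + m - i) mod m))"

definition gen_matrix :: "nat \<Rightarrow> 'a::field R3 \<Rightarrow> 'a R3 \<Rightarrow> (nat \<Rightarrow> nat \<Rightarrow> 'a R3) \<Rightarrow> nat \<Rightarrow> nat \<Rightarrow> 'a R3" where
  "gen_matrix n \<alpha> \<omega> M i j =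
     (if j < n then (if i = j then 1 else 0)
      else (let k = j - n in
            if i = 0 \<and> k = 0 then \<alpha>
            else if i = 0 \<or> k = 0 then \<omega>
            else M (i - 1) (k - 1)))"

end

theory Submission
  imports Defs
begin

lemma sum_split_add:
  fixes n m :: nat
  shows "(\<Sum>j<n+m. f j) = (\<Sum>j<n. f j) + (\<Sum>k<m. (f (n+k) :: 'b::comm_monoid_add))"
  by (induction m) (simp_all add: add.assoc)

definition pinv :: "nat \<Rightarrow> nat \<Rightarrow> nat" where
  "pinv n i = (if i = 0 then 0 else n - i)"

lemma pinv_lt: "i < n \<Longrightarrow> pinv n i < n"
  by (auto simp: pinv_def)

lemma pinv_inv: "i < n \<Longrightarrow> pinv n (pinv n i) = i"
  by (auto simp: pinv_def)

lemma pinv_bij: "bij_betw (pinv n) {..<n} {..<n}"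
  by (rule bij_betw_byWitness[where f'="pinv n"]) (auto simp: pinv_inv pinv_lt)

lemma sum_pinv: "(\<Sum>i<n. g (pinv n i)) = (\<Sum>i<n. (g i :: 'b::comm_monoid_add))"
  using sum.reindex_bij_betw[OF pinv_bij, of g n] by simp

lemma nat_eq_aux: "(a::nat) < m \<Longrightarrow> b < m \<Longrightarrow> m - 1 - a + m - (m - 1 - b) = b + m - a"
proof -
  assume h: "a < m" "b < m"
  define c where "c = m - 1 - a"
  define d where "d = m - 1 - b"
  have c: "c + a + 1 = m" using h c_def by simp
  have d: "d + b + 1 = m" using h d_def by simp
  show ?thesis unfolding c_def[symmetric] d_def[symmetric] using c d by simp
qed

lemma sym_A:
  assumes circ: "circulant (n - 1) M" and i: "i < n" and k: "k < n"
  shows "gen_matrix n \<alpha> \<omega> M i (n+k) = gen_matrix n \<alpha> \<omega> M (pinv n k) (n + pinv n i)"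
proof -
  consider "i = 0 \<and> k = 0" | "i = 0 \<and> k \<noteq> 0" | "i \<noteq> 0 \<and> k = 0" | "i \<noteq> 0 \<and> k \<noteq> 0" by blast
  then show ?thesis
  proof cases
    case 4
    let ?m = "n - 1"
    have a: "i - 1 < ?m" "k - 1 < ?m" using i k 4 by auto
    have e1: "pinv n k - 1 = ?m - 1 - (k - 1)" "pinv n i - 1 = ?m - 1 - (i - 1)"
      using 4 i k unfolding pinv_def by simp_all
    have M1: "M (i-1) (k-1) = M 0 ((k - 1 + ?m - (i - 1)) mod ?m)"
      using circ[unfolded circulant_def, rule_format, OF a] .
    have M2: "M (?m - 1 - (k - 1)) (?m - 1 - (i - 1)) =
        M 0 ((?m - 1 - (i - 1) + ?m - (?m - 1 - (k - 1))) mod ?m)"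
    proof -
      have "?m - 1 - (k - 1) < ?m" "?m - 1 - (i - 1) < ?m" using a by auto
      then show ?thesis by (rule circ[unfolded circulant_def, rule_format])
    qed
    have eq: "?m - 1 - (i - 1) + ?m - (?m - 1 - (k - 1)) = k - 1 + ?m - (i - 1)"
      using nat_eq_aux[OF a(1) a(2)] .
    have pk: "pinv n k \<noteq> 0" "pinv n i \<noteq> 0" using 4 i k unfolding pinv_def by simp_all
    have G1: "gen_matrix n \<alpha> \<omega> M i (n+k) = M (i-1) (k-1)"
      using 4 by (simp add: gen_matrix_def Let_def)
    have G2: "gen_matrix n \<alpha> \<omega> M (pinv n k) (n + pinv n i) = M (pinv n k - 1) (pinv n i - 1)"
      using pk by (simp add: gen_matrix_def Let_def)
    have "M (i-1) (k-1) = M (pinv n k - 1) (pinv n i - 1)"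
      unfolding e1 M1 M2 eq ..
    then show ?thesis using G1 G2 by simp
  next
    case 1 then show ?thesis by (simp add: gen_matrix_def pinv_def)
  next
    case 2
    then have "pinv n k \<noteq> 0" "pinv n i = 0" using k unfolding pinv_def by simp_all
    then show ?thesis using 2 by (simp add: gen_matrix_def Let_def)
  next
    case 3
    then have "pinv n k = 0" "pinv n i \<noteq> 0" using i unfolding pinv_def by simp_all
    then show ?thesis using 3 by (simp add: gen_matrix_def Let_def)
  qed
qed

lemma sum_delta: "j < (n::nat) \<Longrightarrow> (\<Sum>i<n. x i * (if i = j then 1 else 0)) = (x j :: 'b::comm_ring_1)"
proof -
  assume "j < n"
  have "(\<Sum>i<n. x i * (if i = j then 1 else 0)) = (\<Sum>i<n. if i = j then x j else 0)"
    by (rule sum.cong) auto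
  also have "\<dots> = x j" using \<open>j < n\<close> by (subst sum.delta) auto
  finally show ?thesis .
qed

lemma sum_delta2: "i < (n::nat) \<Longrightarrow> (\<Sum>l<n. (if l = i then 1 else 0) * f l) = (f i :: 'b::comm_ring_1)"
  using sum_delta[of i n f] by (simp add: mult.commute)

definition wt :: "'a::field R3 \<Rightarrow> nat" where
  "wt r = (if c0 r \<noteq> 0 then 1 else 0) + (if c0 r + c2 r \<noteq> 0 then 1 else 0) + (if c1 r \<noteq> 0 then 1 else 0)"

lemma wt_uminus: "wt (- r) = wt r"
proof -
  have "- c0 r + - c2 r = - (c0 r + c2 r)" by simp
  then show ?thesis by (simp add: wt_def uminus_R3_def neg_eq_iff_add_eq_0)
qed

lemma card_filter_sum: "card {k. k < (m::nat) \<and> P k} = (\<Sum>k<m. if P k then 1 else 0)"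
proof -
  have "{k. k < m \<and> P k} = {k\<in>{..<m}. P k}" by auto
  then show ?thesis by (simp add: sum.inter_filter[symmetric])
qed

lemma lee_sum: "lee_weight N c = (\<Sum>i<N. wt (c i))"
proof -
  let ?f = "\<lambda>k. if gray N c k \<noteq> 0 then (1::nat) else 0"
  have "lee_weight N c = (\<Sum>k<N + (N + N). ?f k)"
    unfolding lee_weight_def card_filter_sum by (simp add: numeral_3_eq_3)
  also have "\<dots> = (\<Sum>k<N. ?f k) + ((\<Sum>k<N. ?f (N+k)) + (\<Sum>k<N. ?f (N+(N+k))))"
    by (simp add: sum_split_add)
  also have "(\<Sum>k<N. ?f k) = (\<Sum>k<N. if c0 (c k) \<noteq> 0 then 1 else 0)"
    by (rule sum.cong) (auto simp: gray_def)
  also have "(\<Sum>k<N. ?f (N+k)) = (\<Sum>k<N. if c0 (c k) + c2 (c k) \<noteq> 0 then 1 else 0)"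
    by (rule sum.cong) (auto simp: gray_def)
  also have "(\<Sum>k<N. ?f (N+(N+k))) = (\<Sum>k<N. if c1 (c k) \<noteq> 0 then 1 else 0)"
    by (rule sum.cong) (auto simp: gray_def)
  finally show ?thesis by (simp add: wt_def sum.distrib add.assoc)
qed

context
  fixes n :: nat and \<alpha> \<omega> :: "'a::field R3" and M :: "nat \<Rightarrow> nat \<Rightarrow> 'a R3"
begin

abbreviation "GG \<equiv> gen_matrix n \<alpha> \<omega> M"
abbreviation "AA i k \<equiv> GG i (n + k)"
abbreviation "CC \<equiv> row_span n (2*n) GG"

lemma GG_left: "j < n \<Longrightarrow> GG i j = (if i = j then 1 else 0)"
  by (simp add: gen_matrix_def)

lemma CC_char: "c \<in> CC \<longleftrightarrow> c \<in> vecs (2*n) \<and> (\<forall>k<n. c (n+k) = (\<Sum>i<n. c i * AA i k))"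
proof
  assume "c \<in> CC"
  then obtain x where x: "c = (\<lambda>j. if j < 2*n then (\<Sum>i<n. x i * GG i j) else 0)"
    unfolding row_span_def by blast
  have cj: "j < n \<Longrightarrow> c j = x j" for j
    using x by (simp add: GG_left sum_delta)
  show "c \<in> vecs (2*n) \<and> (\<forall>k<n. c (n+k) = (\<Sum>i<n. c i * AA i k))"
    using x cj by (auto simp: vecs_def)
next
  assume h: "c \<in> vecs (2*n) \<and> (\<forall>k<n. c (n+k) = (\<Sum>i<n. c i * AA i k))"
  have "c = (\<lambda>j. if j < 2*n then (\<Sum>i<n. c i * GG i j) else 0)"
  proof
    fix j
    show "c j = (if j < 2*n then (\<Sum>i<n. c i * GG i j) else 0)"
    proof (cases "j < n")
      case True then show ?thesis by (simp add: GG_left sum_delta)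
    next
      case False
      show ?thesis
      proof (cases "j < 2*n")
        case True
        then have "j - n < n" "n + (j - n) = j" using False by auto
        then show ?thesis using h True by metis
      next
        case False then show ?thesis using h by (simp add: vecs_def)
      qed
    qed
  qed
  then show "c \<in> CC" unfolding row_span_def by blast
qed

lemma DD_char: "z \<in> dual_code (2*n) CC \<longleftrightarrow>
   z \<in> vecs (2*n) \<and> (\<forall>i<n. z i = - (\<Sum>k<n. AA i k * z (n+k)))"
proof
  assume zD: "z \<in> dual_code (2*n) CC"
  then have zv: "z \<in> vecs (2*n)" by (simp add: dual_code_def)
  show "z \<in> vecs (2*n) \<and> (\<forall>i<n. z i = - (\<Sum>k<n. AA i k * z (n+k)))"
  proof (intro conjI allI impI zv)
    fix i assume i: "i < n"
    define y where "y = (\<lambda>j. if j < 2*n then GG i j else 0)"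
    have "y = (\<lambda>j. if j < 2*n then (\<Sum>l<n. (if l = i then 1 else 0) * GG l j) else 0)"
      by (auto simp: y_def sum_delta2[OF i, of "\<lambda>l. GG l _"])
    then have yC: "y \<in> CC" unfolding row_span_def mem_Collect_eq
      by (rule exI[where x="\<lambda>l. if l = i then 1 else 0"])
    have "0 = (\<Sum>j<2*n. z j * y j)" using zD yC by (simp add: dual_code_def)
    also have "\<dots> = (\<Sum>j<n. z j * y j) + (\<Sum>k<n. z (n+k) * y (n+k))"
      using sum_split_add[of "\<lambda>j. z j * y j" n n] by (simp add: mult_2)
    also have "(\<Sum>j<n. z j * y j) = (\<Sum>j<n. z j * (if i = j then 1 else 0))"
      by (rule sum.cong) (auto simp: y_def GG_left)
    also have "\<dots> = z i" using sum_delta[OF i, of z] by (simp add: eq_commute)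
    also have "(\<Sum>k<n. z (n+k) * y (n+k)) = (\<Sum>k<n. AA i k * z (n+k))"
      by (rule sum.cong) (auto simp: y_def mult.commute)
    finally show "z i = - (\<Sum>k<n. AA i k * z (n+k))"
      by (simp add: eq_neg_iff_add_eq_0)
  qed
next
  assume h: "z \<in> vecs (2*n) \<and> (\<forall>i<n. z i = - (\<Sum>k<n. AA i k * z (n+k)))"
  show "z \<in> dual_code (2*n) CC" unfolding dual_code_def
  proof (intro CollectI conjI ballI)
    show "z \<in> vecs (2*n)" using h by simp
    fix y assume "y \<in> CC"
    then have hy: "\<forall>k<n. y (n+k) = (\<Sum>i<n. y i * AA i k)" by (simp add: CC_char)
    have "(\<Sum>j<2*n. z j * y j) = (\<Sum>j<n. z j * y j) + (\<Sum>k<n. z (n+k) * y (n+k))"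
      using sum_split_add[of "\<lambda>j. z j * y j" n n] by (simp add: mult_2)
    also have "(\<Sum>j<n. z j * y j) = (\<Sum>j<n. - (\<Sum>k<n. AA j k * z (n+k)) * y j)"
      by (rule sum.cong) (use h in auto)
    also have "\<dots> = - (\<Sum>j<n. \<Sum>k<n. AA j k * z (n+k) * y j)"
      by (simp add: sum_distrib_right sum_negf)
    also have "(\<Sum>k<n. z (n+k) * y (n+k)) = (\<Sum>k<n. \<Sum>j<n. z (n+k) * (y j * AA j k))"
      by (rule sum.cong) (use hy in \<open>auto simp: sum_distrib_left\<close>)
    also have "\<dots> = (\<Sum>j<n. \<Sum>k<n. AA j k * z (n+k) * y j)"
      by (subst sum.swap) (simp add: mult_ac)
    finally show "(\<Sum>j<2*n. z j * y j) = 0" by simp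
  qed
qed


definition phi :: "(nat \<Rightarrow> 'a R3) \<Rightarrow> nat \<Rightarrow> 'a R3" where
  "phi c i = (if i < n then - c (n + pinv n i) else if i < 2*n then c (pinv n (i - n)) else 0)"

definition psi :: "(nat \<Rightarrow> 'a R3) \<Rightarrow> nat \<Rightarrow> 'a R3" where
  "psi d i = (if i < n then d (n + pinv n i) else if i < 2*n then - d (pinv n (i - n)) else 0)"

lemma phi_in:
  assumes circ: "circulant (n - 1) M" and c: "c \<in> CC"
  shows "phi c \<in> dual_code (2*n) CC"
  unfolding DD_char
proof (intro conjI allI impI)
  show "phi c \<in> vecs (2*n)" by (simp add: vecs_def phi_def)
  fix i assume i: "i < n"
  have hc: "\<forall>k<n. c (n+k) = (\<Sum>j<n. c j * AA j k)" using c by (simp add: CC_char)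
  have "(\<Sum>k<n. AA i k * phi c (n+k)) = (\<Sum>k<n. AA i (pinv n (pinv n k)) * c (pinv n k))"
    by (rule sum.cong) (auto simp: phi_def pinv_inv)
  also have "\<dots> = (\<Sum>j<n. AA i (pinv n j) * c j)"
    using sum_pinv[of "\<lambda>j. AA i (pinv n j) * c j" n] .
  also have "\<dots> = (\<Sum>j<n. c j * AA j (pinv n i))"
  proof (rule sum.cong)
    fix j assume "j \<in> {..<n}"
    then have j: "j < n" by simp
    have "AA i (pinv n j) = AA (pinv n (pinv n j)) (pinv n i)"
      using sym_A[OF circ i pinv_lt[OF j]] .
    then show "AA i (pinv n j) * c j = c j * AA j (pinv n i)"
      using j by (simp add: pinv_inv mult.commute)
  qed simp
  also have "\<dots> = c (n + pinv n i)" using hc pinv_lt[OF i] by simp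
  finally show "phi c i = - (\<Sum>k<n. AA i k * phi c (n+k))" using i by (simp add: phi_def)
qed

lemma psi_in:
  assumes circ: "circulant (n - 1) M" and d: "d \<in> dual_code (2*n) CC"
  shows "psi d \<in> CC"
  unfolding CC_char
proof (intro conjI allI impI)
  show "psi d \<in> vecs (2*n)" by (simp add: vecs_def psi_def)
  fix k assume k: "k < n"
  have hd: "\<forall>i<n. d i = - (\<Sum>j<n. AA i j * d (n+j))" using d by (simp add: DD_char)
  have "(\<Sum>i<n. psi d i * AA i k) = (\<Sum>i<n. d (n + pinv n i) * AA (pinv n (pinv n i)) k)"
    by (rule sum.cong) (auto simp: psi_def pinv_inv)
  also have "\<dots> = (\<Sum>j<n. d (n + j) * AA (pinv n j) k)"
    using sum_pinv[of "\<lambda>j. d (n + j) * AA (pinv n j) k" n] .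
  also have "\<dots> = (\<Sum>j<n. AA (pinv n k) j * d (n+j))"
  proof (rule sum.cong)
    fix j assume "j \<in> {..<n}"
    then have j: "j < n" by simp
    have "AA (pinv n j) k = AA (pinv n k) (pinv n (pinv n j))"
      using sym_A[OF circ pinv_lt[OF j] k] .
    then show "d (n + j) * AA (pinv n j) k = AA (pinv n k) j * d (n+j)"
      using j by (simp add: pinv_inv mult.commute)
  qed simp
  also have "\<dots> = - d (pinv n k)" using hd pinv_lt[OF k] by simp
  finally show "psi d (n+k) = (\<Sum>i<n. psi d i * AA i k)" using k by (simp add: psi_def)
qed

lemma psi_phi: "c \<in> vecs (2*n) \<Longrightarrow> psi (phi c) = c"
proof
  fix i assume c: "c \<in> vecs (2*n)"
  show "psi (phi c) i = c i"
  proof (cases "i < n")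
    case True then show ?thesis by (simp add: psi_def phi_def pinv_inv pinv_lt)
  next
    case False
    show ?thesis
    proof (cases "i < 2*n")
      case True
      then have "i - n < n" using False by simp
      then show ?thesis using True False by (simp add: psi_def phi_def pinv_inv pinv_lt)
    next
      case False2: False
      then show ?thesis using c False by (simp add: psi_def vecs_def)
    qed
  qed
qed

lemma phi_psi: "d \<in> vecs (2*n) \<Longrightarrow> phi (psi d) = d"
proof
  fix i assume d: "d \<in> vecs (2*n)"
  show "phi (psi d) i = d i"
  proof (cases "i < n")
    case True then show ?thesis by (simp add: psi_def phi_def pinv_inv pinv_lt)
  next
    case False
    show ?thesis
    proof (cases "i < 2*n")
      case True
      then have "i - n < n" using False by simp
      then show ?thesis using True False by (simp add: psi_def phi_def pinv_inv pinv_lt)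
    next
      case False2: False
      then show ?thesis using d False by (simp add: phi_def vecs_def)
    qed
  qed
qed


lemma lw_phi: "lee_weight (2*n) (phi c) = lee_weight (2*n) c"
proof -
  have "lee_weight (2*n) (phi c) = (\<Sum>i<n+n. wt (phi c i))" by (simp add: lee_sum mult_2)
  also have "\<dots> = (\<Sum>i<n. wt (phi c i)) + (\<Sum>k<n. wt (phi c (n+k)))" by (rule sum_split_add)
  also have "(\<Sum>i<n. wt (phi c i)) = (\<Sum>i<n. wt (c (n + pinv n i)))"
    by (rule sum.cong) (auto simp: phi_def wt_uminus)
  also have "\<dots> = (\<Sum>i<n. wt (c (n + i)))" using sum_pinv[of "\<lambda>i. wt (c (n+i))" n] .
  also have "(\<Sum>k<n. wt (phi c (n+k))) = (\<Sum>k<n. wt (c (pinv n k)))"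
    by (rule sum.cong) (auto simp: phi_def)
  also have "\<dots> = (\<Sum>k<n. wt (c k))" using sum_pinv[of "\<lambda>i. wt (c i)" n] .
  also have "(\<Sum>i<n. wt (c (n + i))) + (\<Sum>k<n. wt (c k)) = (\<Sum>i<n+n. wt (c i))"
    using sum_split_add[of "\<lambda>i. wt (c i)" n n] by simp
  also have "\<dots> = lee_weight (2*n) c" by (simp add: lee_sum mult_2)
  finally show ?thesis .
qed

lemma CC_linear: "is_linear_code (2*n) CC"
  unfolding is_linear_code_def
proof (intro conjI ballI allI)
  show "CC \<subseteq> vecs (2*n)" using CC_char by blast
  show "(\<lambda>_. 0) \<in> CC" by (simp add: CC_char vecs_def)
  fix x y assume x: "x \<in> CC" and y: "y \<in> CC"
  then show "(\<lambda>i. x i + y i) \<in> CC"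
    by (auto simp: CC_char vecs_def sum.distrib distrib_right)
next
  fix r x assume x: "x \<in> CC"
  then show "(\<lambda>i. r * x i) \<in> CC"
    by (auto simp: CC_char vecs_def sum_distrib_left mult.assoc)
qed

lemma CC_fsd:
  assumes circ: "circulant (n - 1) M"
  shows "formally_self_dual (2*n) CC"
  unfolding formally_self_dual_def
proof
  fix w
  have "bij_betw phi {c\<in>CC. lee_weight (2*n) c = w} {d\<in>dual_code (2*n) CC. lee_weight (2*n) d = w}"
  proof (rule bij_betw_byWitness[where f'=psi])
    show "\<forall>a\<in>{c\<in>CC. lee_weight (2*n) c = w}. psi (phi a) = a"
      using CC_char psi_phi by blast
    show "\<forall>a\<in>{d\<in>dual_code (2*n) CC. lee_weight (2*n) d = w}. phi (psi a) = a"
      using DD_char phi_psi by blast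
    show "phi ` {c\<in>CC. lee_weight (2*n) c = w} \<subseteq> {d\<in>dual_code (2*n) CC. lee_weight (2*n) d = w}"
      using phi_in[OF circ] lw_phi by auto
    show "psi ` {d\<in>dual_code (2*n) CC. lee_weight (2*n) d = w} \<subseteq> {c\<in>CC. lee_weight (2*n) c = w}"
    proof
      fix c assume "c \<in> psi ` {d\<in>dual_code (2*n) CC. lee_weight (2*n) d = w}"
      then obtain d where d: "d \<in> dual_code (2*n) CC" "lee_weight (2*n) d = w" and cd: "c = psi d"
        by blast
      have "phi c = d" using cd phi_psi d(1) DD_char by blast
      then have "lee_weight (2*n) c = w" using lw_phi[of c] d(2) by simp
      then show "c \<in> {c\<in>CC. lee_weight (2*n) c = w}" using psi_in[OF circ d(1)] cd by simp
    qed
  qed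
  then show "lee_weight_enum (2*n) CC w = lee_weight_enum (2*n) (dual_code (2*n) CC) w"
    unfolding lee_weight_enum_def by (rule bij_betw_same_card)
qed

end

theorem theorem17:
  fixes n :: nat and \<alpha> \<omega> :: "'a::{field,finite} R3"
    and M :: "nat \<Rightarrow> nat \<Rightarrow> 'a R3"
  assumes "circulant (n - 1) M"
  shows "is_linear_code (2*n) (row_span n (2*n) (gen_matrix n \<alpha> \<omega> M)) \<and>
         formally_self_dual (2*n) (row_span n (2*n) (gen_matrix n \<alpha> \<omega> M))"
  using CC_linear CC_fsd[OF assms] by blast

end
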